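(* Let ${\bf i}=(i_1,\dots,i_N)$ be a reduced word for $w_0$. Then ${\mathcal H}_{\bf i}=\Big\{\big(\sum_{i\in I}m_{1,i}h_i,\ \sum_{i\in I}m_{2,i}h_i,\ \dots,\ \sum_{i\in I}m_{N,i}h_i\big)\ \Big|\ (h_1,\dots,h_n)\in\mathbb Z^n\Big\}$.
   Context: $A=(a_{ij})_{i,j\in I}$ is the Cartan matrix of a simple Lie algebra ($a_{ij}=\alpha_j(h_i)$), $I=\{1,\dots,n\}$, $w_0$ the longest Weyl group element of length $N$. For $k\in[1,N]$ let $k^{(+)}:=\min\{l>k\mid i_l=i_k\}$ when it exists. Define linear forms on $\mathbb Z^N$: $\beta_k(x)=x_k+\sum_{k<j<k^{(+)}}a_{i_k,i_j}x_j+x_{k^{(+)}}$, and ${\mathcal H}_{\bf i}:=\{x\in\mathbb Z^N\mid\beta_k(x)=0$ for all $k$ such that $k^{(+)}$ exists (i.e. $k^{(+)}\le N$)$\}$. Let $Q'=\bigoplus_{i\in I}\mathbb Z\alpha'_i$ with reflections $s_i(\alpha'_j)=\alpha'_j-a_{ji}\alpha'_i$ (the root lattice and Weyl group action of the Langlands dual algebra). Set $\alpha^{(k)}:=s_{i_N}s_{i_{N-1}}\cdots s_{i_{k+1}}(\alpha'_{i_k})$ and write $\alpha^{(k)}=\sum_{i\in I}m_{k,i}\alpha'_i$ with $m_{k,i}\in\mathbb Z_{\ge0}$ (these $\alpha^{(k)}$ are exactly the positive roots). *)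

theory Defs
  imports Complex_Main
begin

text \<open>Index set I = {1..n}; Cartan matrix A :: nat => nat => int with a_ij = A i j.\<close>

definition is_simple_cartan :: "nat \<Rightarrow> (nat \<Rightarrow> nat \<Rightarrow> int) \<Rightarrow> bool" where
  "is_simple_cartan n A \<longleftrightarrow>
     n \<ge> 1 \<and>
     (\<forall>i\<in>{1..n}. A i i = 2) \<and>
     (\<forall>i\<in>{1..n}. \<forall>j\<in>{1..n}. i \<noteq> j \<longrightarrow> A i j \<le> 0) \<and>
     (\<forall>i\<in>{1..n}. \<forall>j\<in>{1..n}. A i j = 0 \<longleftrightarrow> A j i = 0) \<and>
     (\<not> (\<exists>J K. J \<noteq> {} \<and> K \<noteq> {} \<and> J \<inter> K = {} \<and> J \<union> K = {1..n} \<and>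
              (\<forall>j\<in>J. \<forall>k\<in>K. A j k = 0))) \<and>
     (\<exists>d :: nat \<Rightarrow> int. (\<forall>i\<in>{1..n}. d i > 0) \<and>
        (\<forall>i\<in>{1..n}. \<forall>j\<in>{1..n}. d i * A i j = d j * A j i) \<and>
        (\<forall>x :: nat \<Rightarrow> real. (\<exists>i\<in>{1..n}. x i \<noteq> 0) \<longrightarrow>
            (\<Sum>i\<in>{1..n}. \<Sum>j\<in>{1..n}. real_of_int (d i * A i j) * x i * x j) > 0))"

text \<open>Simple reflection s_i on Q' in coordinates w.r.t. alpha'_1..alpha'_n:
  s_i(alpha'_j) = alpha'_j - a_ji alpha'_i.\<close>
definition refl :: "nat \<Rightarrow> (nat \<Rightarrow> nat \<Rightarrow> int) \<Rightarrow> nat \<Rightarrow> (nat \<Rightarrow> int) \<Rightarrow> (nat \<Rightarrow> int)" where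
  "refl n A i x = (\<lambda>k. if k = i then x k - (\<Sum>j\<in>{1..n}. A j i * x j) else x k)"

definition word_act :: "nat \<Rightarrow> (nat \<Rightarrow> nat \<Rightarrow> int) \<Rightarrow> nat list \<Rightarrow> (nat \<Rightarrow> int) \<Rightarrow> (nat \<Rightarrow> int)" where
  "word_act n A ws = foldr (refl n A) ws"

definition reduced_word :: "nat \<Rightarrow> (nat \<Rightarrow> nat \<Rightarrow> int) \<Rightarrow> nat list \<Rightarrow> bool" where
  "reduced_word n A ws \<longleftrightarrow> set ws \<subseteq> {1..n} \<and>
     (\<forall>vs. set vs \<subseteq> {1..n} \<longrightarrow> word_act n A vs = word_act n A ws \<longrightarrow> length ws \<le> length vs)"

text \<open>Reduced word of the longest element w0: a reduced word of maximal length.\<close>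
definition reduced_word_w0 :: "nat \<Rightarrow> (nat \<Rightarrow> nat \<Rightarrow> int) \<Rightarrow> nat list \<Rightarrow> bool" where
  "reduced_word_w0 n A ws \<longleftrightarrow> reduced_word n A ws \<and>
     (\<forall>vs. reduced_word n A vs \<longrightarrow> length vs \<le> length ws)"

text \<open>Positions are 1-based: i_k = ws ! (k-1), k in {1..N}.\<close>
definition wi :: "nat list \<Rightarrow> nat \<Rightarrow> nat" where
  "wi ws k = ws ! (k - 1)"

definition has_plus :: "nat list \<Rightarrow> nat \<Rightarrow> bool" where
  "has_plus ws k \<longleftrightarrow> (\<exists>l. k < l \<and> l \<le> length ws \<and> wi ws l = wi ws k)"

definition kplus :: "nat list \<Rightarrow> nat \<Rightarrow> nat" where
  "kplus ws k = (LEAST l. k < l \<and> l \<le> length ws \<and> wi ws l = wi ws k)"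

definition beta :: "(nat \<Rightarrow> nat \<Rightarrow> int) \<Rightarrow> nat list \<Rightarrow> nat \<Rightarrow> (nat \<Rightarrow> int) \<Rightarrow> int" where
  "beta A ws k x = x k + (\<Sum>j\<in>{k<..<kplus ws k}. A (wi ws k) (wi ws j) * x j) + x (kplus ws k)"

text \<open>Z^N as functions nat => int supported on {1..N}.\<close>
definition H_i :: "(nat \<Rightarrow> nat \<Rightarrow> int) \<Rightarrow> nat list \<Rightarrow> (nat \<Rightarrow> int) set" where
  "H_i A ws = {x. (\<forall>k. k \<notin> {1..length ws} \<longrightarrow> x k = 0) \<and>
       (\<forall>k\<in>{1..length ws}. has_plus ws k \<longrightarrow> beta A ws k x = 0)}"

text \<open>alpha^(k) = s_{i_N} ... s_{i_{k+1}} (alpha'_{i_k}); m k i its i-th coordinate.\<close>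
definition mcoef :: "nat \<Rightarrow> (nat \<Rightarrow> nat \<Rightarrow> int) \<Rightarrow> nat list \<Rightarrow> nat \<Rightarrow> nat \<Rightarrow> int" where
  "mcoef n A ws k i = word_act n A (rev (drop k ws)) (\<lambda>l. if l = wi ws k then 1 else 0) i"

end

theory Submission
  imports Defs
begin

definition ev :: "nat \<Rightarrow> nat \<Rightarrow> int" where
  "ev c = (\<lambda>l. if l = c then 1 else 0)"

lemma mcoef_alt: "mcoef n A ws k i = word_act n A (rev (drop k ws)) (ev (wi ws k)) i"
  by (simp add: mcoef_def ev_def)

lemma refl_lin:
  "refl n A i (\<lambda>d. a * x d + b * y d) = (\<lambda>d. a * refl n A i x d + b * refl n A i y d)"
proof -
  have "(\<Sum>j\<in>{1..n}. A j i * (a * x j + b * y j)) =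
        a * (\<Sum>j\<in>{1..n}. A j i * x j) + b * (\<Sum>j\<in>{1..n}. A j i * y j)"
    by (simp add: sum.distrib sum_distrib_left algebra_simps)
  then show ?thesis unfolding refl_def by (auto intro!: ext simp: algebra_simps)
qed

lemma wa_lin:
  "word_act n A ws (\<lambda>d. a * x d + b * y d) = (\<lambda>d. a * word_act n A ws x d + b * word_act n A ws y d)"
  by (induction ws) (simp_all add: word_act_def refl_lin)

lemma wa_notin: "d \<notin> set ws \<Longrightarrow> word_act n A ws x d = x d"
  by (induction ws) (auto simp: word_act_def refl_def)

lemma wa_step:
  assumes "1 \<le> m" "m \<le> length ws"
  shows "word_act n A (rev (drop (m-1) ws)) x = word_act n A (rev (drop m ws)) (refl n A (wi ws m) x)"
proof -
  have "drop (m-1) ws = ws ! (m-1) # drop m ws"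
    using assms Cons_nth_drop_Suc[of "m-1" ws] by simp
  then show ?thesis by (simp add: word_act_def wi_def)
qed

lemma refl_e_other:
  assumes "c \<noteq> i" "i \<in> {1..n}"
  shows "refl n A c (ev i) = (\<lambda>d. 1 * ev i d + (- A i c) * ev c d)"
proof -
  have "(\<Sum>j\<in>{1..n}. A j c * ev i j) = A i c"
    using assms by (simp add: ev_def if_distrib sum.delta cong: if_cong)
  then show ?thesis using assms unfolding refl_def by (auto intro!: ext simp: ev_def)
qed

lemma refl_e_self:
  assumes "i \<in> {1..n}" "A i i = 2"
  shows "refl n A i (ev i) = (\<lambda>d. (-1) * ev i d + 0 * ev i d)"
proof -
  have "(\<Sum>j\<in>{1..n}. A j i * ev i j) = A i i"
    using assms by (simp add: ev_def if_distrib sum.delta cong: if_cong)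
  then show ?thesis using assms unfolding refl_def by (auto intro!: ext simp: ev_def)
qed

lemma kplus_props:
  assumes "has_plus ws k"
  shows "k < kplus ws k \<and> kplus ws k \<le> length ws \<and> wi ws (kplus ws k) = wi ws k"
  using assms unfolding has_plus_def kplus_def by (metis (mono_tags, lifting) LeastI)

lemma kplus_min:
  assumes "has_plus ws k" "k < j" "j < kplus ws k"
  shows "wi ws j \<noteq> wi ws k"
proof
  assume "wi ws j = wi ws k"
  moreover have "j \<le> length ws" using kplus_props[OF assms(1)] assms by simp
  ultimately have "kplus ws k \<le> j" unfolding kplus_def using assms(2) by (simp add: Least_le)
  then show False using assms by simp
qed

lemma wi_in: "set ws \<subseteq> {1..n} \<Longrightarrow> 1 \<le> k \<Longrightarrow> k \<le> length ws \<Longrightarrow> wi ws k \<in> {1..n}"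
  unfolding wi_def by (metis One_nat_def Suc_le_eq Suc_pred diff_less le_less_trans less_one nth_mem not_le subsetD zero_less_one)

lemma root_rel:
  assumes ws: "set ws \<subseteq> {1..n}" and diag: "\<forall>i\<in>{1..n}. A i i = 2"
    and k: "1 \<le> k" "k \<le> length ws" and hp: "has_plus ws k"
  shows "mcoef n A ws k d + (\<Sum>j\<in>{k<..<kplus ws k}. A (wi ws k) (wi ws j) * mcoef n A ws j d)
          + mcoef n A ws (kplus ws k) d = 0"
proof -
  define i where "i = wi ws k"
  define p where "p = kplus ws k"
  define T where "T m = word_act n A (rev (drop m ws))" for m
  have pp: "k < p" "p \<le> length ws" "wi ws p = i" using kplus_props[OF hp] by (auto simp: p_def i_def)
  have iin: "i \<in> {1..n}" using wi_in[OF ws k] i_def by simp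
  have r: "mcoef n A ws j d' = T j (ev (wi ws j)) d'" for j d' by (simp add: mcoef_alt T_def)
  have ind: "k + t < p \<longrightarrow> (\<forall>d'. T (k+t) (ev i) d' = mcoef n A ws k d' +
        (\<Sum>j\<in>{k<..k+t}. A i (wi ws j) * mcoef n A ws j d'))" for t
  proof (induction t)
    case 0
    then show ?case by (simp add: r i_def)
  next
    case (Suc t)
    show ?case
    proof (intro impI allI)
      fix d'
      assume lt: "k + Suc t < p"
      define m where "m = k + t"
      define c where "c = wi ws (Suc m)"
      have cne: "c \<noteq> i" unfolding c_def i_def m_def
        using kplus_min[OF hp, of "Suc (k+t)"] lt p_def by simp
      have st: "T m x = T (Suc m) (refl n A c x)" for x
        using wa_step[of "Suc m" ws n A x] lt pp unfolding T_def c_def m_def by simp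
      have "T m (ev i) d' = T (Suc m) (ev i) d' - A i c * T (Suc m) (ev c) d'"
        using st[of "ev i"] unfolding refl_e_other[OF cne iin] T_def wa_lin by simp
      moreover have "T (Suc m) (ev c) d' = mcoef n A ws (Suc m) d'" by (simp add: r c_def)
      moreover have "T m (ev i) d' = mcoef n A ws k d' + (\<Sum>j\<in>{k<..m}. A i (wi ws j) * mcoef n A ws j d')"
        using Suc lt m_def by simp
      moreover have "{k<..Suc m} = insert (Suc m) {k<..m}" by (auto simp: m_def)
      moreover have "k < Suc m" by (simp add: m_def)
      ultimately show "T (k + Suc t) (ev i) d' = mcoef n A ws k d' +
        (\<Sum>j\<in>{k<..k + Suc t}. A i (wi ws j) * mcoef n A ws j d')"
        unfolding m_def c_def by (simp add: algebra_simps)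
    qed
  qed
  have a: "T (p-1) (ev i) d = mcoef n A ws k d + (\<Sum>j\<in>{k<..p-1}. A i (wi ws j) * mcoef n A ws j d)"
    using ind[of "p-1-k"] pp by simp
  have st: "T (p-1) x = T p (refl n A i x)" for x
    using wa_step[of p ws n A x] pp unfolding T_def by simp
  have "T (p-1) (ev i) d = - T p (ev i) d"
    using st[of "ev i"] unfolding refl_e_self[of i n A, OF iin diag[rule_format, OF iin]] T_def wa_lin by simp
  moreover have "T p (ev i) d = mcoef n A ws p d" using r pp by simp
  moreover have "{k<..p-1} = {k<..<p}" using pp by auto
  ultimately show ?thesis using a by (simp add: i_def p_def)
qed



lemma swap_aux: "(\<Sum>j\<in>S. a j * (\<Sum>i\<in>I. m j i * (h i::int))) = (\<Sum>i\<in>I. (\<Sum>j\<in>S. a j * m j i) * h i)"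
  unfolding sum_distrib_left sum_distrib_right by (subst sum.swap) (simp add: mult.assoc)

definition Phi :: "nat \<Rightarrow> (nat \<Rightarrow> nat \<Rightarrow> int) \<Rightarrow> nat list \<Rightarrow> (nat \<Rightarrow> int) \<Rightarrow> nat \<Rightarrow> int" where
  "Phi n A ws h = (\<lambda>k. if k \<in> {1..length ws} then (\<Sum>i\<in>{1..n}. mcoef n A ws k i * h i) else 0)"

lemma Phi_in_H:
  assumes ws: "set ws \<subseteq> {1..n}" and diag: "\<forall>i\<in>{1..n}. A i i = 2"
  shows "Phi n A ws h \<in> H_i A ws"
  unfolding H_i_def
proof (intro CollectI conjI allI impI ballI)
  fix k assume kn: "k \<notin> {1..length ws}" show "Phi n A ws h k = 0" unfolding Phi_def using kn by (simp only: if_False)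
next
  fix k assume k: "k \<in> {1..length ws}" and hp: "has_plus ws k"
  define p where "p = kplus ws k"
  have pp: "k < p" "p \<le> length ws" using kplus_props[OF hp] p_def by auto
  let ?m = "mcoef n A ws"
  have e1: "Phi n A ws h j = (\<Sum>i\<in>{1..n}. ?m j i * h i)" if "k \<le> j" "j \<le> p" for j
    using that k pp by (simp add: Phi_def)
  have "beta A ws k (Phi n A ws h) = (\<Sum>i\<in>{1..n}. ?m k i * h i)
     + (\<Sum>j\<in>{k<..<p}. A (wi ws k) (wi ws j) * (\<Sum>i\<in>{1..n}. ?m j i * h i))
     + (\<Sum>i\<in>{1..n}. ?m p i * h i)"
    proof -
    have "(\<Sum>j\<in>{k<..<p}. A (wi ws k) (wi ws j) * Phi n A ws h j)
        = (\<Sum>j\<in>{k<..<p}. A (wi ws k) (wi ws j) * (\<Sum>i\<in>{1..n}. ?m j i * h i))"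
      by (rule sum.cong) (auto simp: e1)
    moreover have "Phi n A ws h k = (\<Sum>i\<in>{1..n}. ?m k i * h i)" using e1 pp by simp
    moreover have "Phi n A ws h p = (\<Sum>i\<in>{1..n}. ?m p i * h i)" using e1 pp by simp
    ultimately show ?thesis unfolding beta_def p_def[symmetric] by simp
  qed
  also have "\<dots> = (\<Sum>i\<in>{1..n}. (?m k i + (\<Sum>j\<in>{k<..<p}. A (wi ws k) (wi ws j) * ?m j i) + ?m p i) * h i)"
    unfolding swap_aux by (simp add: sum.distrib algebra_simps)
  also have "\<dots> = 0"
    using root_rel[of ws n A, OF ws diag, of k] k hp p_def by simp
  finally show "beta A ws k (Phi n A ws h) = 0" .
qed

lemma solve:
  assumes ws: "set ws \<subseteq> {1..n}" and m: "m \<le> length ws"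
  shows "\<exists>h. \<forall>k. m < k \<and> k \<le> length ws \<and> \<not> has_plus ws k \<longrightarrow>
           (\<Sum>i\<in>{1..n}. mcoef n A ws k i * h i) = g k"
  using m
proof (induction rule: inc_induct)
  case base
  then show ?case by auto
next
  case (step m)
  then obtain h' where h': "\<forall>k. Suc m < k \<and> k \<le> length ws \<and> \<not> has_plus ws k \<longrightarrow>
           (\<Sum>i\<in>{1..n}. mcoef n A ws k i * h' i) = g k" by blast
  show ?case
  proof (cases "has_plus ws (Suc m)")
    case True
    show ?thesis
    proof (intro exI[of _ h'] allI impI)
      fix k assume k: "m < k \<and> k \<le> length ws \<and> \<not> has_plus ws k"
      have "k \<noteq> Suc m" using True k by metis
      then have sk: "Suc m < k" using k by simp
      show "(\<Sum>i\<in>{1..n}. mcoef n A ws k i * h' i) = g k" using h'[rule_format, of k] k sk by simp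
    qed
  next
    case False
    define c where "c = wi ws (Suc m)"
    have cin: "c \<in> {1..n}" using wi_in[OF ws, of "Suc m"] step c_def by simp
    have notin: "c \<notin> set (drop (Suc m) ws)"
    proof
      assume "c \<in> set (drop (Suc m) ws)"
      then obtain q where q: "q < length ws - Suc m" "ws ! (Suc m + q) = c"
        by (auto simp: in_set_conv_nth)
      then have "has_plus ws (Suc m)" unfolding has_plus_def c_def wi_def
        by (intro exI[of _ "Suc (Suc m + q)"]) auto
      then show False using False by simp
    qed
    define t where "t = g (Suc m) - (\<Sum>i\<in>{1..n}. mcoef n A ws (Suc m) i * h' i)"
    define h where "h = (\<lambda>i. h' i + t * ev c i)"
    have sh: "(\<Sum>i\<in>{1..n}. mcoef n A ws k i * h i) = (\<Sum>i\<in>{1..n}. mcoef n A ws k i * h' i) + t * mcoef n A ws k c" for k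
    proof -
      have "(\<Sum>i\<in>{1..n}. mcoef n A ws k i * h i) = (\<Sum>i\<in>{1..n}. mcoef n A ws k i * h' i) + (\<Sum>i\<in>{1..n}. mcoef n A ws k i * (t * ev c i))"
        by (simp add: h_def algebra_simps sum.distrib)
      also have "(\<Sum>i\<in>{1..n}. mcoef n A ws k i * (t * ev c i)) = t * mcoef n A ws k c"
        using cin by (simp add: ev_def if_distrib sum.delta cong: if_cong)
      finally show ?thesis .
    qed
    have m1: "mcoef n A ws (Suc m) c = 1"
      unfolding mcoef_alt c_def[symmetric] using notin by (simp add: wa_notin ev_def)
    have m0: "mcoef n A ws k c = 0" if "Suc m < k" "k \<le> length ws" "\<not> has_plus ws k" for k
    proof -
      have "c \<notin> set (drop k ws)" using notin set_drop_subset_set_drop[of "Suc m" k ws] that by auto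
      moreover have "wi ws k \<noteq> c"
        using False that unfolding has_plus_def c_def by auto
      ultimately show ?thesis unfolding mcoef_alt using wa_notin by (simp add: ev_def)
    qed
    show ?thesis
    proof (intro exI[of _ h] allI impI)
      fix k assume k: "m < k \<and> k \<le> length ws \<and> \<not> has_plus ws k"
      show "(\<Sum>i\<in>{1..n}. mcoef n A ws k i * h i) = g k"
      proof (cases "k = Suc m")
        case True then show ?thesis using sh m1 t_def by simp
      next
        case F2: False
        then have "Suc m < k" using k by simp
        then show ?thesis using sh m0 h' k by simp
      qed
    qed
  qed
qed

lemma uniq:
  assumes x: "x \<in> H_i A ws" and y: "y \<in> H_i A ws"
    and agree: "\<forall>k\<in>{1..length ws}. \<not> has_plus ws k \<longrightarrow> x k = y k"
  shows "x = y"
proof -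
  have Q: "\<forall>k. m < k \<and> k \<le> length ws \<longrightarrow> x k = y k" if "m \<le> length ws" for m
    using that
  proof (induction rule: inc_induct)
    case base then show ?case by auto
  next
    case (step m)
    have xs: "x (Suc m) = y (Suc m)"
    proof (cases "has_plus ws (Suc m)")
      case False then show ?thesis using agree step by auto
    next
      case True
      define p where "p = kplus ws (Suc m)"
      have pp: "Suc m < p" "p \<le> length ws" using kplus_props[OF True] p_def by auto
      have bx: "beta A ws (Suc m) x = 0" using x True step unfolding H_i_def by auto
      have by': "beta A ws (Suc m) y = 0" using y True step unfolding H_i_def by auto
      have s: "(\<Sum>j\<in>{Suc m<..<p}. A (wi ws (Suc m)) (wi ws j) * x j) = (\<Sum>j\<in>{Suc m<..<p}. A (wi ws (Suc m)) (wi ws j) * y j)"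
        using step.IH pp by (intro sum.cong) auto
      have "x p = y p" using step.IH pp by auto
      then show ?thesis using bx by' s unfolding beta_def p_def[symmetric] by linarith
    qed
    show ?case
    proof (intro allI impI)
      fix k assume k: "m < k \<and> k \<le> length ws"
      show "x k = y k"
      proof (cases "k = Suc m")
        case True with xs show ?thesis by simp
      next
        case False then have "Suc m < k" using k by simp
        then show ?thesis using step.IH[rule_format, of k] k by simp
      qed
    qed
  qed
  show ?thesis
  proof
    fix k
    show "x k = y k"
    proof (cases "k \<in> {1..length ws}")
      case True then show ?thesis using Q[of 0] by auto
    next
      case False then show ?thesis using x y unfolding H_i_def by auto
    qed
  qed
qed

theorem lemma8p1:
  fixes n :: nat and A :: "nat \<Rightarrow> nat \<Rightarrow> int" and ws :: "nat list"
  assumes "is_simple_cartan n A"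
    and "reduced_word_w0 n A ws"
  shows "H_i A ws =
    {(\<lambda>k. if k \<in> {1..length ws} then (\<Sum>i\<in>{1..n}. mcoef n A ws k i * h i) else 0) | h :: nat \<Rightarrow> int. True}"
proof -
  have ws: "set ws \<subseteq> {1..n}" using assms(2) unfolding reduced_word_w0_def reduced_word_def by simp
  have diag: "\<forall>i\<in>{1..n}. A i i = 2" using assms(1) unfolding is_simple_cartan_def by simp
  show ?thesis
  proof (intro equalityI subsetI)
    fix x assume xH: "x \<in> H_i A ws"
    obtain h where h: "\<forall>k. 0 < k \<and> k \<le> length ws \<and> \<not> has_plus ws k \<longrightarrow>
           (\<Sum>i\<in>{1..n}. mcoef n A ws k i * h i) = x k"
      using solve[OF ws, of 0 A x] by auto
    have "x = Phi n A ws h"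
      by (rule uniq[OF xH Phi_in_H[of ws n A, OF ws diag]]) (use h in \<open>auto simp: Phi_def\<close>)
    then show "x \<in> {(\<lambda>k. if k \<in> {1..length ws} then (\<Sum>i\<in>{1..n}. mcoef n A ws k i * h i) else 0) | h :: nat \<Rightarrow> int. True}"
      unfolding Phi_def by blast
  next
    fix x assume "x \<in> {(\<lambda>k. if k \<in> {1..length ws} then (\<Sum>i\<in>{1..n}. mcoef n A ws k i * h i) else 0) | h :: nat \<Rightarrow> int. True}"
    then obtain h where "x = Phi n A ws h" unfolding Phi_def by blast
    then show "x \<in> H_i A ws" using Phi_in_H[of ws n A, OF ws diag] by simp
  qed
qed

end
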